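(* Let $G$ be a simple connected bipartite graph on $n\ge 3$ vertices with maximum degree $\Delta\le n-2$ and Wiener index $W$. Suppose $\deg(v_1)=\cdots=\deg(v_k)=\Delta$ for some $1\le k\le n$, and for $1\le i\le k$ let $a_i=4(W-D_i-t_{v_i}\Delta)(\Delta+1)+2n\Delta^{2}+nD_i+nt_{v_i}\Delta$ and $b_i=4D_i^{2}+8D_it_{v_i}\Delta+4t_{v_i}^{2}\Delta^{2}-8W\Delta^{2}-4WD_i-4Wt_{v_i}\Delta$. Then (i) $\displaystyle q^{\mathcal{D}}(G)\ge \max_{1\le i\le k}\frac{a_i+\sqrt{a_i^{2}+4b_i(1+\Delta)(n-\Delta-1)}}{2(1+\Delta)(n-\Delta-1)}$; (ii) $\displaystyle q^{\mathcal{D}}_{min}(G)\le \min_{1\le i\le k}\frac{a_i-\sqrt{a_i^{2}+4b_i(1+\Delta)(n-\Delta-1)}}{2(1+\Delta)(n-\Delta-1)}$.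
   Context: $G$ has vertex set $\{v_1,\dots,v_n\}$; $d_G$ is the graph distance; $\mathcal{D}(G)=(d_G(v_i,v_j))$. $D_i=\sum_{j\ne i}d_G(v_i,v_j)$ is the transmission of $v_i$, $Tr(G)=\mathrm{diag}(D_1,\dots,D_n)$, $\mathcal{Q}(G)=Tr(G)+\mathcal{D}(G)$. $W=\sum_{i<j}d_G(v_i,v_j)$. For a vertex $v$ of degree $d_v$, $t_v=\frac{1}{d_v}\sum_{v_j\sim v}D_j$. $q^{\mathcal{D}}(G)$, $q^{\mathcal{D}}_{min}(G)$ are the largest and least eigenvalues of $\mathcal{Q}(G)$. *)

theory Defs
  imports "HOL-Analysis.Analysis"
begin

definition simple_graph :: "('n \<Rightarrow> 'n \<Rightarrow> bool) \<Rightarrow> bool" where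
  "simple_graph E \<longleftrightarrow> (\<forall>u v. E u v \<longrightarrow> E v u) \<and> (\<forall>u. \<not> E u u)"

fun walk :: "('n \<Rightarrow> 'n \<Rightarrow> bool) \<Rightarrow> 'n list \<Rightarrow> bool" where
  "walk E [] = False"
| "walk E [x] = True"
| "walk E (x # y # xs) = (E x y \<and> walk E (y # xs))"

definition connected_graph :: "('n \<Rightarrow> 'n \<Rightarrow> bool) \<Rightarrow> bool" where
  "connected_graph E \<longleftrightarrow> (\<forall>u v. \<exists>p. walk E p \<and> hd p = u \<and> last p = v)"

definition bipartite :: "('n \<Rightarrow> 'n \<Rightarrow> bool) \<Rightarrow> bool" where
  "bipartite E \<longleftrightarrow> (\<exists>S. \<forall>u v. E u v \<longrightarrow> (u \<in> S \<longleftrightarrow> v \<notin> S))"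

definition gdist :: "('n \<Rightarrow> 'n \<Rightarrow> bool) \<Rightarrow> 'n \<Rightarrow> 'n \<Rightarrow> nat" where
  "gdist E u v = (LEAST k. \<exists>p. walk E p \<and> hd p = u \<and> last p = v \<and> length p = Suc k)"

definition degree :: "('n::finite \<Rightarrow> 'n \<Rightarrow> bool) \<Rightarrow> 'n \<Rightarrow> nat" where
  "degree E v = card {w. E v w}"

definition max_degree :: "('n::finite \<Rightarrow> 'n \<Rightarrow> bool) \<Rightarrow> nat" where
  "max_degree E = Max (range (degree E))"

definition transmission :: "('n::finite \<Rightarrow> 'n \<Rightarrow> bool) \<Rightarrow> 'n \<Rightarrow> real" where
  "transmission E v = (\<Sum>w\<in>UNIV - {v}. real (gdist E v w))"

text \<open>Wiener index W = sum over unordered pairs of distinct vertices = half the ordered sum.\<close>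
definition wiener :: "('n::finite \<Rightarrow> 'n \<Rightarrow> bool) \<Rightarrow> real" where
  "wiener E = (\<Sum>u\<in>UNIV. \<Sum>v\<in>UNIV. real (gdist E u v)) / 2"

definition tv :: "('n::finite \<Rightarrow> 'n \<Rightarrow> bool) \<Rightarrow> 'n \<Rightarrow> real" where
  "tv E v = (\<Sum>w\<in>{w. E v w}. transmission E w) / real (degree E v)"

definition distance_matrix :: "('n::finite \<Rightarrow> 'n \<Rightarrow> bool) \<Rightarrow> real^'n^'n" where
  "distance_matrix E = (\<chi> i j. real (gdist E i j))"

definition transmission_matrix :: "('n::finite \<Rightarrow> 'n \<Rightarrow> bool) \<Rightarrow> real^'n^'n" where
  "transmission_matrix E = (\<chi> i j. if i = j then transmission E i else 0)"

definition dsl_matrix :: "('n::finite \<Rightarrow> 'n \<Rightarrow> bool) \<Rightarrow> real^'n^'n" where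
  "dsl_matrix E = transmission_matrix E + distance_matrix E"

definition eigenvalues :: "real^'n^'n \<Rightarrow> real set" where
  "eigenvalues A = {c. \<exists>x. x \<noteq> 0 \<and> A *v x = c *\<^sub>R x}"

definition q_max :: "('n::finite \<Rightarrow> 'n \<Rightarrow> bool) \<Rightarrow> real" where
  "q_max E = Max (eigenvalues (dsl_matrix E))"

definition q_min :: "('n::finite \<Rightarrow> 'n \<Rightarrow> bool) \<Rightarrow> real" where
  "q_min E = Min (eigenvalues (dsl_matrix E))"

definition a_coef :: "('n::finite \<Rightarrow> 'n \<Rightarrow> bool) \<Rightarrow> 'n \<Rightarrow> real" where
  "a_coef E v = (let n = real CARD('n); \<Delta> = real (max_degree E); W = wiener E;
                     D = transmission E v; t = tv E v in
     4 * (W - D - t * \<Delta>) * (\<Delta> + 1) + 2 * n * \<Delta>^2 + n * D + n * t * \<Delta>)"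

definition b_coef :: "('n::finite \<Rightarrow> 'n \<Rightarrow> bool) \<Rightarrow> 'n \<Rightarrow> real" where
  "b_coef E v = (let \<Delta> = real (max_degree E); W = wiener E;
                     D = transmission E v; t = tv E v in
     4 * D^2 + 8 * D * t * \<Delta> + 4 * t^2 * \<Delta>^2 - 8 * W * \<Delta>^2 - 4 * W * D - 4 * W * t * \<Delta>)"

end

theory Submission
  imports Defs "HOL-Analysis.Analysis"
begin


lemma sym_inner:
  fixes A :: "real^'n^'n"
  assumes "transpose A = A"
  shows "(A *v x) \<bullet> y = x \<bullet> (A *v y)"
proof -
  have "(A *v x) \<bullet> y = (x v* A) \<bullet> y"
    by (metis assms transpose_matrix_vector)
  thus ?thesis by (simp add: dot_lmul_matrix)
qed

lemma rayleigh_max: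
  fixes A :: "real^'n^'n"
  assumes sym: "transpose A = A"
  shows "\<exists>c x. x \<noteq> 0 \<and> A *v x = c *\<^sub>R x \<and> (\<forall>y. y \<bullet> (A *v y) \<le> c * (y \<bullet> y))"
proof -
  define f where "f = (\<lambda>y::real^'n. y \<bullet> (A *v y))"
  have cont: "continuous_on (sphere 0 1) f"
    unfolding f_def by (intro continuous_intros linear_continuous_on bounded_linear_intros)
  have ne: "sphere (0::real^'n) 1 \<noteq> {}"
    by (simp add: sphere_def) (metis norm_sgn sgn_zero_iff vector_choose_size zero_le_one)
  obtain x where x: "x \<in> sphere 0 1" and xmax: "\<And>y. y \<in> sphere 0 1 \<Longrightarrow> f y \<le> f x"
    using continuous_attains_sup[OF compact_sphere ne cont] by blast
  define c where "c = f x"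
  have nx: "norm x = 1" using x by simp
  have bound: "f y \<le> c * (y \<bullet> y)" for y
  proof (cases "y = 0")
    case True thus ?thesis by (simp add: f_def)
  next
    case False
    define u where "u = y /\<^sub>R norm y"
    have "u \<in> sphere 0 1" using False by (simp add: u_def)
    hence "f u \<le> c" using xmax c_def by auto
    moreover have "f y = (norm y)^2 * f u"
      using False by (simp add: f_def u_def matrix_vector_mult_scaleR power2_eq_square field_simps)
    moreover have "y \<bullet> y = (norm y)^2" by (simp add: power2_norm_eq_inner)
    ultimately show ?thesis
      by (metis mult.commute mult_right_mono zero_le_power2)
  qed
  define r where "r = A *v x - c *\<^sub>R x"
  define g where "g = (\<lambda>y. f y - c * (y \<bullet> y))"
  have gle: "g y \<le> 0" for y using bound[of y] by (simp add: g_def)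
  have xx: "x \<bullet> x = 1" using nx by (simp add: power2_norm_eq_inner[symmetric])
  have gx: "g x = 0" by (simp add: g_def c_def xx)
  have exp: "g (x + t *\<^sub>R r) = g x + 2 * t * (r \<bullet> r) + t^2 * g r" for t
  proof -
    have s: "(A *v r) \<bullet> x = r \<bullet> (A *v x)" by (simp add: sym_inner[OF sym])
    have "g (x + t *\<^sub>R r) = g x + t * (x \<bullet> (A *v r) + r \<bullet> (A *v x) - 2 * c * (x \<bullet> r)) + t^2 * g r"
      by (simp add: g_def f_def matrix_vector_right_distrib matrix_vector_mult_scaleR
          inner_add_left inner_add_right algebra_simps power2_eq_square inner_commute[of x r])
    moreover have "x \<bullet> (A *v r) = r \<bullet> (A *v x)" using s by (simp add: inner_commute)
    moreover have "r \<bullet> (A *v x) - c * (x \<bullet> r) = r \<bullet> r"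
      by (simp add: r_def inner_diff_left inner_diff_right inner_commute algebra_simps)
    ultimately show ?thesis by (simp add: algebra_simps)
  qed
  have "r = 0"
  proof (rule ccontr)
    assume "r \<noteq> 0"
    hence rp: "r \<bullet> r > 0" by simp
    define K where "K = - g r"
    have K0: "K \<ge> 0" using gle[of r] by (simp add: K_def)
    define t where "t = (r \<bullet> r) / (K + 1)"
    have tp: "t > 0" using K0 rp by (simp add: t_def)
    have "g x + 2 * t * (r \<bullet> r) + t^2 * g r \<le> 0" using gle exp by metis
    hence "2 * t * (r \<bullet> r) \<le> t^2 * K" by (simp add: gx K_def)
    hence "2 * (r \<bullet> r) \<le> t * K" using tp by (simp add: power2_eq_square)
    moreover have "t * K < r \<bullet> r" using K0 rp by (simp add: t_def field_simps)
    ultimately show False using rp by linarith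
  qed
  hence "A *v x = c *\<^sub>R x" by (simp add: r_def)
  moreover have "x \<noteq> 0" using nx by auto
  ultimately show ?thesis using bound unfolding f_def by blast
qed




lemma eig_finite:
  fixes A :: "real^'n^'n"
  assumes sym: "transpose A = A"
  shows "finite (eigenvalues A)"
proof -
  define ev where "ev = (\<lambda>c. SOME x. x \<noteq> 0 \<and> A *v x = c *\<^sub>R x)"
  have evp: "ev c \<noteq> 0 \<and> A *v ev c = c *\<^sub>R ev c" if "c \<in> eigenvalues A" for c
    using that unfolding eigenvalues_def ev_def by (metis (mono_tags, lifting) mem_Collect_eq someI_ex)
  have inj: "inj_on ev (eigenvalues A)"
  proof (rule inj_onI)
    fix c d assume c: "c \<in> eigenvalues A" and d: "d \<in> eigenvalues A" and e: "ev c = ev d"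
    have "c *\<^sub>R ev c = d *\<^sub>R ev c" using evp[OF c] evp[OF d] e by metis
    thus "c = d" using evp[OF c] by (metis scaleR_cancel_right)
  qed
  have orth: "pairwise orthogonal (ev ` eigenvalues A)"
  proof (clarsimp simp: pairwise_def)
    fix c d assume c: "c \<in> eigenvalues A" and d: "d \<in> eigenvalues A" and ne: "ev c \<noteq> ev d"
    have "(A *v ev c) \<bullet> ev d = ev c \<bullet> (A *v ev d)" by (rule sym_inner[OF sym])
    hence "c * (ev c \<bullet> ev d) = d * (ev c \<bullet> ev d)" using evp[OF c] evp[OF d] by simp
    moreover have "c \<noteq> d" using ne by auto
    ultimately show "orthogonal (ev c) (ev d)" by (simp add: orthogonal_def)
  qed
  have "0 \<notin> ev ` eigenvalues A" using evp by auto
  hence "independent (ev ` eigenvalues A)" using pairwise_orthogonal_independent orth by blast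
  hence "finite (ev ` eigenvalues A)" by (rule independent_imp_finite)
  thus ?thesis using finite_imageD inj by blast
qed

lemma eig_max:
  fixes A :: "real^'n^'n"
  assumes sym: "transpose A = A" and x: "x \<noteq> 0"
  shows "Max (eigenvalues A) \<ge> (x \<bullet> (A *v x)) / (x \<bullet> x)"
proof -
  obtain c y where y: "y \<noteq> 0" "A *v y = c *\<^sub>R y" and b: "\<And>z. z \<bullet> (A *v z) \<le> c * (z \<bullet> z)"
    using rayleigh_max[OF sym] by blast
  have ce: "c \<in> eigenvalues A" using y unfolding eigenvalues_def by blast
  have "(x \<bullet> (A *v x)) / (x \<bullet> x) \<le> c" using b[of x] x by (simp add: divide_le_eq)
  also have "c \<le> Max (eigenvalues A)" using ce eig_finite[OF sym] by simp
  finally show ?thesis .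
qed

lemma eig_min:
  fixes A :: "real^'n^'n"
  assumes sym: "transpose A = A" and x: "x \<noteq> 0"
  shows "Min (eigenvalues A) \<le> (x \<bullet> (A *v x)) / (x \<bullet> x)"
proof -
  have sym': "transpose (-A) = -A" using sym by (metis transpose_scalar scaleR_minus1_left)
  have neg: "(-A) *v z = - (A *v z)" for z :: "real^'n"
    by (simp add: vec_eq_iff matrix_vector_mult_def sum_negf)
  obtain c y where y: "y \<noteq> 0" "(-A) *v y = c *\<^sub>R y" and b: "\<And>z. z \<bullet> ((-A) *v z) \<le> c * (z \<bullet> z)"
    using rayleigh_max[OF sym'] by blast
  have ce: "-c \<in> eigenvalues A" using y neg unfolding eigenvalues_def
    by (metis (mono_tags, lifting) mem_Collect_eq minus_equation_iff scaleR_minus_left)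
  have "-c \<le> (x \<bullet> (A *v x)) / (x \<bullet> x)" using b[of x] x neg[of x] by (simp add: le_divide_eq)
  moreover have "Min (eigenvalues A) \<le> -c" using ce eig_finite[OF sym] by simp
  ultimately show ?thesis by linarith
qed



lemma gen_eig_2x2:
  fixes p q s11 s12 s22 l :: real
  assumes p: "p > 0" and q: "q > 0"
    and root: "p * q * l^2 - (q * s11 + p * s22) * l + (s11 * s22 - s12^2) = 0"
  shows "\<exists>\<alpha> \<beta>. p * \<alpha>^2 + q * \<beta>^2 > 0 \<and>
           \<alpha>^2 * s11 + 2 * \<alpha> * \<beta> * s12 + \<beta>^2 * s22 = l * (p * \<alpha>^2 + q * \<beta>^2)"
proof (cases "s12 = 0 \<and> l * p = s11")
  case True
  hence "s12 = 0" "s11 = l * p" by auto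
  thus ?thesis using p by (intro exI[of _ "1::real"] exI[of _ "0::real"]) simp
next
  case False
  define \<alpha> where "\<alpha> = s12"
  define \<beta> where "\<beta> = l * p - s11"
  have ne: "\<alpha> \<noteq> 0 \<or> \<beta> \<noteq> 0" using False by (auto simp: \<alpha>_def \<beta>_def)
  have pos: "p * \<alpha>^2 + q * \<beta>^2 > 0"
    using ne p q by (metis add_pos_nonneg add_nonneg_pos mult_pos_pos mult_nonneg_nonneg
        less_eq_real_def zero_less_power2 zero_le_power2)
  have r0: "s12^2 - (s11 - l * p) * (s22 - l * q) = -(p * q * l^2 - (q * s11 + p * s22) * l + (s11 * s22 - s12^2))"
    by (simp add: algebra_simps power2_eq_square)
  have r: "s12^2 = (s11 - l * p) * (s22 - l * q)" using r0 root by simp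
  have "\<alpha>^2 * s11 + 2 * \<alpha> * \<beta> * s12 + \<beta>^2 * s22 - l * (p * \<alpha>^2 + q * \<beta>^2)
        = \<alpha> * (\<alpha> * (s11 - l*p) + \<beta> * s12) + \<beta> * (\<alpha> * s12 + \<beta> * (s22 - l*q))"
    by (simp add: algebra_simps power2_eq_square)
  also have "\<alpha> * (s11 - l*p) + \<beta> * s12 = 0" by (simp add: \<alpha>_def \<beta>_def algebra_simps)
  also have "\<alpha> * s12 + \<beta> * (s22 - l*q) = 0" using r by (simp add: \<alpha>_def \<beta>_def algebra_simps power2_eq_square)
  finally show ?thesis using pos by (intro exI[of _ \<alpha>] exI[of _ \<beta>]) auto
qed

lemma quad_root:
  fixes p q s11 s12 s22 :: real and sg :: real
  assumes p: "p > 0" and q: "q > 0" and sg: "sg = 1 \<or> sg = -1"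
  defines "a \<equiv> q * s11 + p * s22" and "b \<equiv> s12^2 - s11 * s22"
  defines "l \<equiv> (a + sg * sqrt (a^2 + 4 * b * p * q)) / (2 * p * q)"
  shows "p * q * l^2 - (q * s11 + p * s22) * l + (s11 * s22 - s12^2) = 0"
proof -
  have d: "a^2 + 4 * b * p * q = (q * s11 - p * s22)^2 + 4 * p * q * s12^2"
    by (simp add: a_def b_def algebra_simps power2_eq_square)
  have dn: "a^2 + 4 * b * p * q \<ge> 0" unfolding d using p q by (intro add_nonneg_nonneg) auto
  define s where "s = sqrt (a^2 + 4 * b * p * q)"
  have s2: "s^2 = a^2 + 4 * b * p * q" using dn by (simp add: s_def)
  have sg2: "sg^2 = 1" using sg by auto
  have l: "2 * p * q * l = a + sg * s" using p q by (simp add: l_def s_def)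
  have "4 * p * q * (p * q * l^2 - a * l - b) = (2*p*q*l)^2 - 2 * a * (2*p*q*l) - 4*p*q*b"
    by (simp add: algebra_simps power2_eq_square)
  also have "\<dots> = 0" unfolding l using s2 sg2 by (simp add: algebra_simps power2_eq_square)
  finally have "p * q * l^2 - a * l - b = 0" using p q by simp
  thus ?thesis by (simp add: a_def b_def)
qed



lemma walk_nonempty: "walk E p \<Longrightarrow> p \<noteq> []"
  by (cases p) auto

lemma walk_snoc: "walk E (xs @ [y]) \<Longrightarrow> E y z \<Longrightarrow> walk E (xs @ [y, z])"
proof (induction xs)
  case Nil thus ?case by simp
next
  case (Cons a xs)
  thus ?case by (cases xs) auto
qed

lemma walk_rev: "(\<forall>u v. E u v \<longrightarrow> E v u) \<Longrightarrow> walk E p \<Longrightarrow> walk E (rev p)"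
proof (induction E p rule: walk.induct)
  case (3 E x y xs)
  hence "walk E (rev xs @ [y])" "E y x" by auto
  thus ?case using walk_snoc by fastforce
qed auto

definition wp :: "('n \<Rightarrow> 'n \<Rightarrow> bool) \<Rightarrow> 'n \<Rightarrow> 'n \<Rightarrow> nat \<Rightarrow> bool" where
  "wp E u v k = (\<exists>p. walk E p \<and> hd p = u \<and> last p = v \<and> length p = Suc k)"

lemma gdist_le: "wp E u v k \<Longrightarrow> gdist E u v \<le> k"
  unfolding gdist_def wp_def by (rule Least_le) auto

lemma gdist_ex: assumes "connected_graph E" shows "wp E u v (gdist E u v)"
proof -
  obtain p where p: "walk E p" "hd p = u" "last p = v" using assms unfolding connected_graph_def by blast
  hence "wp E u v (length p - 1)" using walk_nonempty[OF p(1)] unfolding wp_def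
    by (intro exI[of _ p]) auto
  thus ?thesis unfolding gdist_def wp_def[symmetric] by (rule LeastI)
qed

lemma gdist_sym_le:
  assumes "simple_graph E" "connected_graph E" shows "gdist E u v \<le> gdist E v u"
proof -
  obtain p where p: "walk E p" "hd p = v" "last p = u" "length p = Suc (gdist E v u)"
    using gdist_ex[OF assms(2)] unfolding wp_def by blast
  have ne: "p \<noteq> []" using walk_nonempty[OF p(1)] .
  have "wp E u v (gdist E v u)" unfolding wp_def
    using walk_rev[of E p] assms(1) p ne unfolding simple_graph_def
    by (intro exI[of _ "rev p"]) (auto simp: hd_rev last_rev)
  thus ?thesis by (rule gdist_le)
qed

lemma gdist_sym: assumes "simple_graph E" "connected_graph E" shows "gdist E u v = gdist E v u"
  using gdist_sym_le[OF assms] by (meson le_antisym)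

lemma gdist_self: "gdist E u u = 0"
proof -
  have "wp E u u 0" unfolding wp_def by (intro exI[of _ "[u]"]) auto
  thus ?thesis using gdist_le by fastforce
qed

lemma gdist_0: assumes "connected_graph E" "gdist E u v = 0" shows "u = v"
proof -
  obtain p where p: "walk E p" "hd p = u" "last p = v" "length p = Suc 0"
    using gdist_ex[OF assms(1)] assms(2) unfolding wp_def by fastforce
  then obtain x where "p = [x]" by (cases p) auto
  thus ?thesis using p by simp
qed

lemma gdist_1: assumes "simple_graph E" "connected_graph E" "E u v" shows "gdist E u v = 1"
proof -
  have "wp E u v 1" unfolding wp_def using assms(3) by (intro exI[of _ "[u,v]"]) auto
  hence "gdist E u v \<le> 1" by (rule gdist_le)
  moreover have "u \<noteq> v" using assms unfolding simple_graph_def by auto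
  hence "gdist E u v \<noteq> 0" using gdist_0[OF assms(2)] by auto
  ultimately show ?thesis by simp
qed

lemma gdist_1D: assumes "connected_graph E" "gdist E u v = 1" shows "E u v"
proof -
  obtain p where p: "walk E p" "hd p = u" "last p = v" "length p = Suc 1"
    using gdist_ex[OF assms(1)] assms(2) unfolding wp_def by fastforce
  then obtain x y where "p = [x,y]" by (cases p rule: remdups_adj.cases) auto
  thus ?thesis using p by simp
qed

lemma gdist_2:
  assumes "simple_graph E" "connected_graph E" "bipartite E" "E v a" "E v b" "a \<noteq> b"
  shows "gdist E a b = 2"
proof -
  have "wp E a b 2" unfolding wp_def using assms(1,4,5) unfolding simple_graph_def
    by (intro exI[of _ "[a,v,b]"]) auto
  hence "gdist E a b \<le> 2" by (rule gdist_le)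
  moreover have "gdist E a b \<noteq> 0" using gdist_0[OF assms(2)] assms(6) by auto
  moreover have "\<not> E a b"
  proof
    assume ab: "E a b"
    obtain S where S: "\<forall>u v. E u v \<longrightarrow> (u \<in> S \<longleftrightarrow> v \<notin> S)" using assms(3) unfolding bipartite_def by blast
    show False using S assms(4,5) ab by blast
  qed
  hence "gdist E a b \<noteq> 1" using gdist_1D[OF assms(2)] by auto
  ultimately show ?thesis by simp
qed



lemma sum_split_compl: "(\<Sum>i\<in>(UNIV::'n::finite set). f i) = (\<Sum>i\<in>V. f i) + (\<Sum>i\<in>-V. f i)"
proof -
  have "(\<Sum>i\<in>UNIV. f i) = (\<Sum>i\<in>UNIV - V. f i) + (\<Sum>i\<in>V. f i)" by (rule sum.subset_diff) auto
  thus ?thesis by (simp add: Compl_eq_Diff_UNIV add.commute)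
qed

definition blk :: "real^'n^'n \<Rightarrow> 'n::finite set \<Rightarrow> 'n set \<Rightarrow> real" where
  "blk A X Y = (\<Sum>i\<in>X. \<Sum>j\<in>Y. A $ i $ j)"

lemma quad_form:
  fixes A :: "real^'n::finite^'n" and V :: "'n set" and \<alpha> \<beta> :: real
  defines "x \<equiv> (\<chi> i. if i \<in> V then \<alpha> else \<beta>) :: real^'n"
  shows "x \<bullet> (A *v x) = \<alpha>^2 * blk A V V + \<alpha> * \<beta> * blk A V (-V) + \<beta> * \<alpha> * blk A (-V) V + \<beta>^2 * blk A (-V) (-V)"
    and "x \<bullet> x = real (card V) * \<alpha>^2 + real (card (-V)) * \<beta>^2"
proof -
  have row: "(A *v x) $ i = \<alpha> * (\<Sum>j\<in>V. A$i$j) + \<beta> * (\<Sum>j\<in>-V. A$i$j)" for i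
  proof -
    have "(A *v x) $ i = (\<Sum>j\<in>UNIV. A$i$j * x$j)" by (simp add: matrix_vector_mult_def)
    also have "\<dots> = (\<Sum>j\<in>V. A$i$j * x$j) + (\<Sum>j\<in>-V. A$i$j * x$j)" by (rule sum_split_compl)
    also have "(\<Sum>j\<in>V. A$i$j * x$j) = (\<Sum>j\<in>V. A$i$j * \<alpha>)" by (rule sum.cong) (auto simp: x_def)
    also have "(\<Sum>j\<in>-V. A$i$j * x$j) = (\<Sum>j\<in>-V. A$i$j * \<beta>)" by (rule sum.cong) (auto simp: x_def)
    finally show ?thesis by (simp add: sum_distrib_left mult.commute)
  qed
  have "x \<bullet> (A *v x) = (\<Sum>i\<in>UNIV. x$i * (A *v x)$i)" by (simp add: inner_vec_def)
  also have "\<dots> = (\<Sum>i\<in>V. x$i * (A *v x)$i) + (\<Sum>i\<in>-V. x$i * (A *v x)$i)" by (rule sum_split_compl)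
  also have "(\<Sum>i\<in>V. x$i * (A *v x)$i) = (\<Sum>i\<in>V. \<alpha> * (A *v x)$i)" by (rule sum.cong) (auto simp: x_def)
  also have "(\<Sum>i\<in>-V. x$i * (A *v x)$i) = (\<Sum>i\<in>-V. \<beta> * (A *v x)$i)" by (rule sum.cong) (auto simp: x_def)
  finally show "x \<bullet> (A *v x) = \<alpha>^2 * blk A V V + \<alpha> * \<beta> * blk A V (-V) + \<beta> * \<alpha> * blk A (-V) V + \<beta>^2 * blk A (-V) (-V)"
    by (simp add: row blk_def sum.distrib sum_distrib_left algebra_simps power2_eq_square)
  have "x \<bullet> x = (\<Sum>i\<in>UNIV. x$i * x$i)" by (simp add: inner_vec_def)
  also have "\<dots> = (\<Sum>i\<in>V. x$i * x$i) + (\<Sum>i\<in>-V. x$i * x$i)" by (rule sum_split_compl)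
  also have "(\<Sum>i\<in>V. x$i * x$i) = (\<Sum>i\<in>V. \<alpha>^2)" by (rule sum.cong) (auto simp: x_def power2_eq_square)
  also have "(\<Sum>i\<in>-V. x$i * x$i) = (\<Sum>i\<in>-V. \<beta>^2)" by (rule sum.cong) (auto simp: x_def power2_eq_square)
  finally show "x \<bullet> x = real (card V) * \<alpha>^2 + real (card (-V)) * \<beta>^2" by simp
qed

lemma blk_sym:
  fixes A :: "real^'n::finite^'n"
  assumes "transpose A = A" shows "blk A Y X = blk A X Y"
proof -
  have s: "A $ i $ j = A $ j $ i" for i j using assms by (metis transpose_def vec_lambda_beta)
  show ?thesis unfolding blk_def by (subst sum.swap) (simp add: s)
qed

lemma blk_row:
  fixes A :: "real^'n::finite^'n"
  shows "blk A X Y + blk A X (-Y) = (\<Sum>i\<in>X. \<Sum>j\<in>UNIV. A$i$j)"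
  unfolding blk_def by (simp add: sum_split_compl[of _ Y] sum.distrib)

lemma blk_total:
  fixes A :: "real^'n::finite^'n"
  shows "blk A X X + blk A X (-X) + blk A (-X) X + blk A (-X) (-X) = (\<Sum>i\<in>UNIV. \<Sum>j\<in>UNIV. A$i$j)"
  using blk_row[of A X X] blk_row[of A "-X" X] sum_split_compl[of "\<lambda>i. \<Sum>j\<in>UNIV. A$i$j" X]
  by simp



lemma Q_entry: "dsl_matrix E $ i $ j = (if i = j then transmission E i else 0) + real (gdist E i j)"
  by (simp add: dsl_matrix_def transmission_matrix_def distance_matrix_def)

lemma Q_sym: assumes "simple_graph E" "connected_graph E" shows "transpose (dsl_matrix E) = dsl_matrix E"
  by (simp add: vec_eq_iff transpose_def Q_entry gdist_sym[OF assms])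

lemma dist_row: "(\<Sum>j\<in>UNIV. real (gdist E i j)) = transmission E i"
  unfolding transmission_def by (simp add: sum.remove[of UNIV i] gdist_self)

lemma Q_row: "(\<Sum>j\<in>UNIV. dsl_matrix E $ i $ j) = 2 * transmission E i"
  by (simp add: Q_entry sum.distrib dist_row)

lemma trans_sum: "(\<Sum>i\<in>UNIV. transmission E i) = 2 * wiener E"
  by (simp add: wiener_def dist_row[symmetric])

lemma sum_N: "(\<Sum>w\<in>{w. E v w}. transmission E w) = real (degree E v) * tv E v"
proof (cases "degree E v = 0")
  case True
  hence "{w. E v w} = {}" unfolding degree_def by simp
  thus ?thesis using True by simp
next
  case False thus ?thesis by (simp add: tv_def)
qed

lemma s11:
  fixes E :: "'n::finite \<Rightarrow> 'n \<Rightarrow> bool" and v :: 'n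
  assumes G: "simple_graph E" "connected_graph E" "bipartite E"
  defines "V1 \<equiv> insert v {w. E v w}"
  shows "blk (dsl_matrix E) V1 V1 = transmission E v + real (degree E v) * tv E v + 2 * (real (degree E v))^2"
proof -
  define N where "N = {w. E v w}"
  define c where "c = degree E v"
  have vN: "v \<notin> N" using G(1) unfolding N_def simple_graph_def by auto
  have cN: "card N = c" by (simp add: N_def c_def degree_def)
  have p1: "(\<Sum>i\<in>V1. \<Sum>j\<in>V1. (if i = j then transmission E i else 0)) = (\<Sum>i\<in>V1. transmission E i)"
    by (rule sum.cong) auto
  have t1: "(\<Sum>i\<in>V1. transmission E i) = transmission E v + real c * tv E v"
    using vN sum_N[of E v] by (simp add: V1_def N_def[symmetric] c_def)
  have dvj: "(\<Sum>j\<in>N. real (gdist E v j)) = real c"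
    using cN by (simp add: N_def gdist_1[OF G(1,2)])
  have div: "(\<Sum>j\<in>N. real (gdist E j v)) = real c"
    using dvj by (simp add: gdist_sym[OF G(1,2), of _ v])
  have dNN: "(\<Sum>j\<in>N. real (gdist E i j)) = 2 * (real c - 1)" if i: "i \<in> N" for i
  proof -
    have "(\<Sum>j\<in>N. real (gdist E i j)) = real (gdist E i i) + (\<Sum>j\<in>N-{i}. real (gdist E i j))"
      using i by (simp add: sum.remove)
    also have "(\<Sum>j\<in>N-{i}. real (gdist E i j)) = (\<Sum>j\<in>N-{i}. 2)"
      by (rule sum.cong) (use i in \<open>auto simp: N_def gdist_2[OF G]\<close>)
    also have "\<dots> = 2 * (real c - 1)"
    proof -
      have fN: "finite N" by simp
      have "card (N - {i}) = c - 1" using i cN by simp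
      moreover have "c \<ge> 1" using i cN fN by (metis One_nat_def Suc_leI card_gt_0_iff empty_iff)
      ultimately show ?thesis by (simp add: of_nat_diff)
    qed
    finally show ?thesis by (simp add: gdist_self)
  qed
  have p2: "(\<Sum>i\<in>V1. \<Sum>j\<in>V1. real (gdist E i j)) = 2 * (real c)^2"
  proof -
    have "(\<Sum>i\<in>V1. \<Sum>j\<in>V1. real (gdist E i j))
       = (real (gdist E v v) + (\<Sum>j\<in>N. real (gdist E v j))) + (\<Sum>i\<in>N. real (gdist E i v) + (\<Sum>j\<in>N. real (gdist E i j)))"
      using vN by (simp add: V1_def N_def[symmetric])
    also have "(\<Sum>i\<in>N. real (gdist E i v) + (\<Sum>j\<in>N. real (gdist E i j))) = real c + (\<Sum>i\<in>N. 2 * (real c - 1))"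
      by (simp add: sum.distrib div dNN)
    finally show ?thesis using cN dvj by (simp add: gdist_self algebra_simps power2_eq_square)
  qed
  show ?thesis unfolding blk_def Q_entry sum.distrib p1 t1 p2 c_def by simp
qed

lemma s11_s12:
  fixes E :: "'n::finite \<Rightarrow> 'n \<Rightarrow> bool" and v :: 'n
  assumes "simple_graph E"
  defines "V1 \<equiv> insert v {w. E v w}"
  shows "blk (dsl_matrix E) V1 V1 + blk (dsl_matrix E) V1 (-V1) = 2 * (transmission E v + real (degree E v) * tv E v)"
proof -
  have vN: "v \<notin> {w. E v w}" using assms(1) unfolding simple_graph_def by auto
  show ?thesis unfolding blk_row Q_row using vN sum_N[of E v]
    by (simp add: V1_def sum_distrib_left[symmetric])
qed

lemma total4W:
  "blk (dsl_matrix E) X X + blk (dsl_matrix E) X (-X) + blk (dsl_matrix E) (-X) X + blk (dsl_matrix E) (-X) (-X) = 4 * wiener E"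
  unfolding blk_total Q_row by (simp add: sum_distrib_left[symmetric] trans_sum)



lemma two_block_bound:
  fixes Q :: "real^'n::finite^'n" and V :: "'n set" and l :: real
  assumes sym: "transpose Q = Q"
    and p: "real (card V) > 0" and q: "real (card (-V)) > 0"
    and root: "real (card V) * real (card (-V)) * l^2 - (real (card (-V)) * blk Q V V + real (card V) * blk Q (-V) (-V)) * l
               + (blk Q V V * blk Q (-V) (-V) - (blk Q V (-V))^2) = 0"
  shows "Max (eigenvalues Q) \<ge> l \<and> Min (eigenvalues Q) \<le> l"
proof -
  obtain \<alpha> \<beta> where ab: "real (card V) * \<alpha>^2 + real (card (-V)) * \<beta>^2 > 0"
    "\<alpha>^2 * blk Q V V + 2 * \<alpha> * \<beta> * blk Q V (-V) + \<beta>^2 * blk Q (-V) (-V)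
      = l * (real (card V) * \<alpha>^2 + real (card (-V)) * \<beta>^2)"
    using gen_eig_2x2[OF p q root] by blast
  define x :: "real^'n" where "x = (\<chi> i. if i \<in> V then \<alpha> else \<beta>)"
  have xx: "x \<bullet> x = real (card V) * \<alpha>^2 + real (card (-V)) * \<beta>^2"
    unfolding x_def by (rule quad_form(2))
  have xQx: "x \<bullet> (Q *v x) = l * (x \<bullet> x)"
    unfolding xx using ab(2) quad_form(1)[of V \<alpha> \<beta> Q] blk_sym[OF sym, of "-V" V]
    by (simp add: x_def algebra_simps)
  have x0: "x \<noteq> 0" using xx ab(1) by auto
  have r: "(x \<bullet> (Q *v x)) / (x \<bullet> x) = l" using xQx x0 by simp
  show ?thesis using eig_max[OF sym x0] eig_min[OF sym x0] r by simp
qed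

lemma vertex_bound:
  fixes E :: "'n::finite \<Rightarrow> 'n \<Rightarrow> bool" and v :: 'n and sg :: real
  assumes G: "simple_graph E" "connected_graph E" "bipartite E"
      and n3: "CARD('n) \<ge> 3"
      and md: "max_degree E \<le> CARD('n) - 2"
      and dv: "degree E v = max_degree E"
      and sg: "sg = 1 \<or> sg = -1"
  defines "L \<equiv> (a_coef E v + sg * sqrt ((a_coef E v)^2
              + 4 * b_coef E v * (1 + real (max_degree E)) * (real CARD('n) - real (max_degree E) - 1)))
            / (2 * (1 + real (max_degree E)) * (real CARD('n) - real (max_degree E) - 1))"
  shows "q_max E \<ge> L \<and> q_min E \<le> L"
proof -
  define Q where "Q = dsl_matrix E"
  define V where "V = insert v {w. E v w}"
  define \<Delta> where "\<Delta> = real (max_degree E)"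
  define n where "n = real CARD('n)"
  define X where "X = transmission E v + \<Delta> * tv E v"
  define W where "W = wiener E"
  define s11 where "s11 = blk Q V V"
  define s12 where "s12 = blk Q V (-V)"
  define s22 where "s22 = blk Q (-V) (-V)"
  have vN: "v \<notin> {w. E v w}" using G(1) unfolding simple_graph_def by auto
  have cV: "card V = max_degree E + 1" using vN dv by (simp add: V_def degree_def)
  have le: "max_degree E + 1 \<le> CARD('n)" using md n3 by linarith
  have cV2: "card (-V) = CARD('n) - (max_degree E + 1)" using cV card_Diff_subset[of V UNIV] by (simp add: Compl_eq_Diff_UNIV)
  have p: "real (card V) = 1 + \<Delta>" using cV by (simp add: \<Delta>_def)
  have q: "real (card (-V)) = n - \<Delta> - 1" using cV2 le by (simp add: of_nat_diff n_def \<Delta>_def)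
  have pp: "1 + \<Delta> > 0" by (simp add: \<Delta>_def add_pos_nonneg)
  have le2: "max_degree E + 2 \<le> CARD('n)" using md n3 by linarith
  hence "real (max_degree E) + 2 \<le> real CARD('n)" by (metis of_nat_add of_nat_le_iff of_nat_numeral)
  hence qp: "n - \<Delta> - 1 > 0" by (simp add: n_def \<Delta>_def)
  have e1: "s11 = X + 2 * \<Delta>^2" using s11[OF G, of v] dv by (simp add: s11_def Q_def V_def X_def \<Delta>_def)
  have e2: "s11 + s12 = 2 * X" using s11_s12[OF G(1), of v] dv by (simp add: s11_def s12_def Q_def V_def X_def \<Delta>_def)
  have e3: "s11 + 2 * s12 + s22 = 4 * W"
    using total4W[of E V] blk_sym[OF Q_sym[OF G(1,2)], of "-V" V]
    by (simp add: s11_def s12_def s22_def Q_def W_def)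
  have s12e: "s12 = X - 2 * \<Delta>^2" using e1 e2 by simp
  have s22e: "s22 = 4 * W - 3 * X + 2 * \<Delta>^2" using e1 e3 s12e by simp
  have A: "a_coef E v = (n - \<Delta> - 1) * s11 + (1 + \<Delta>) * s22"
    unfolding e1 s22e a_coef_def Let_def n_def[symmetric] \<Delta>_def[symmetric] W_def[symmetric] X_def
    by (simp add: algebra_simps power2_eq_square)
  have B: "b_coef E v = s12^2 - s11 * s22"
    unfolding e1 s22e s12e b_coef_def Let_def \<Delta>_def[symmetric] W_def[symmetric] X_def
    by (simp add: algebra_simps power2_eq_square)
  have L: "L = (((n - \<Delta> - 1) * s11 + (1 + \<Delta>) * s22) + sg * sqrt (((n - \<Delta> - 1) * s11 + (1 + \<Delta>) * s22)^2
             + 4 * (s12^2 - s11 * s22) * (1 + \<Delta>) * (n - \<Delta> - 1))) / (2 * (1 + \<Delta>) * (n - \<Delta> - 1))"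
    unfolding L_def A B \<Delta>_def n_def ..
  have root: "(1 + \<Delta>) * (n - \<Delta> - 1) * L^2 - ((n - \<Delta> - 1) * s11 + (1 + \<Delta>) * s22) * L + (s11 * s22 - s12^2) = 0"
    unfolding L by (rule quad_root[OF pp qp sg])
  have "Max (eigenvalues Q) \<ge> L \<and> Min (eigenvalues Q) \<le> L"
    by (rule two_block_bound[OF Q_sym[OF G(1,2), folded Q_def], where V=V and l=L])
       (use root pp qp in \<open>simp_all add: p q s11_def s12_def s22_def\<close>)
  thus ?thesis by (simp add: q_max_def q_min_def Q_def)
qed

theorem corollary4p2:
  fixes E :: "'n::finite \<Rightarrow> 'n \<Rightarrow> bool" and K :: "'n set"
  assumes "simple_graph E" and "connected_graph E" and "bipartite E"
      and "CARD('n) \<ge> 3"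
      and "max_degree E \<le> CARD('n) - 2"
      and "K \<noteq> {}" and "\<forall>v\<in>K. degree E v = max_degree E"
  shows "(q_max E \<ge> Max ((\<lambda>v. (a_coef E v + sqrt ((a_coef E v)^2
              + 4 * b_coef E v * (1 + real (max_degree E)) * (real CARD('n) - real (max_degree E) - 1)))
            / (2 * (1 + real (max_degree E)) * (real CARD('n) - real (max_degree E) - 1))) ` K)) \<and>
         (q_min E \<le> Min ((\<lambda>v. (a_coef E v - sqrt ((a_coef E v)^2
              + 4 * b_coef E v * (1 + real (max_degree E)) * (real CARD('n) - real (max_degree E) - 1)))
            / (2 * (1 + real (max_degree E)) * (real CARD('n) - real (max_degree E) - 1))) ` K))"
  proof
  let ?f = "(\<lambda>v. (a_coef E v + sqrt ((a_coef E v)^2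
              + 4 * b_coef E v * (1 + real (max_degree E)) * (real CARD('n) - real (max_degree E) - 1)))
            / (2 * (1 + real (max_degree E)) * (real CARD('n) - real (max_degree E) - 1)))"
  let ?g = "(\<lambda>v. (a_coef E v - sqrt ((a_coef E v)^2
              + 4 * b_coef E v * (1 + real (max_degree E)) * (real CARD('n) - real (max_degree E) - 1)))
            / (2 * (1 + real (max_degree E)) * (real CARD('n) - real (max_degree E) - 1)))"
  have fK: "finite K" by simp
  have "Max (?f ` K) \<in> ?f ` K" using fK assms(6) by (intro Max_in) auto
  then obtain v where v: "v \<in> K" "Max (?f ` K) = ?f v" by blast
  have "Min (?g ` K) \<in> ?g ` K" using fK assms(6) by (intro Min_in) auto
  then obtain w where w: "w \<in> K" "Min (?g ` K) = ?g w" by blast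
  have "q_max E \<ge> ?f v"
    using vertex_bound[OF assms(1-5), of v 1] v(1) assms(7) by simp
  thus "q_max E \<ge> Max (?f ` K)" using v(2) by simp
  have "q_min E \<le> ?g w"
    using vertex_bound[OF assms(1-5), of w "-1"] w(1) assms(7) by simp
  thus "q_min E \<le> Min (?g ` K)" using w(2) by simp
qed

end
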